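(* Let $M$ be a $d$-disk system and let $\lambda,\lambda'\ge0$ satisfy $\sqrt{2d/(d+1)}\,\lambda'\le\lambda$. Then $$\mathcal{VR}_M(\lambda')\subseteq\mathscr C_M(\lambda)\subseteq\mathcal{VR}_M(\lambda).$$
   Context: A $d$-disk system is a finite collection $M=\{D(c_i;r_i)\}_{i=1}^m$ of closed Euclidean balls in $\mathbb R^d$ with $r_i>0$. For $\lambda\ge0$: $\mathscr C_M(\lambda)$ is the set of nonempty subsets $\sigma\subseteq M$ such that $\bigcap_{D(c_i;r_i)\in\sigma}D(c_i;\lambda r_i)\ne\emptyset$ (generalized Čech complex at scale $\lambda$), and $\mathcal{VR}_M(\lambda)$ is the set of nonempty subsets $\sigma\subseteq M$ such that $D(c_i;\lambda r_i)\cap D(c_j;\lambda r_j)\neq\emptyset$ for all $D(c_i;r_i),D(c_j;r_j)\in\sigma$ (generalized Vietoris–Rips complex at scale $\lambda$). *)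

theory Defs
  imports "HOL-Analysis.Analysis"
begin

text \<open>A disk system in a Euclidean space 'a (of dimension DIM('a) = d) is a finite
  set of (center, radius) pairs with positive radii; the pair (c,r) stands for
  the closed ball cball c r.\<close>

definition disk_system :: "('a::euclidean_space \<times> real) set \<Rightarrow> bool" where
  "disk_system M \<longleftrightarrow> finite M \<and> (\<forall>(c, r) \<in> M. r > 0)"

definition gen_cech :: "('a::euclidean_space \<times> real) set \<Rightarrow> real \<Rightarrow> ('a \<times> real) set set" where
  "gen_cech M lam = {\<sigma>. \<sigma> \<noteq> {} \<and> \<sigma> \<subseteq> M \<and>
      (\<Inter>(c, r) \<in> \<sigma>. cball c (lam * r)) \<noteq> {}}"

definition gen_VR :: "('a::euclidean_space \<times> real) set \<Rightarrow> real \<Rightarrow> ('a \<times> real) set set" where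
  "gen_VR M lam = {\<sigma>. \<sigma> \<noteq> {} \<and> \<sigma> \<subseteq> M \<and>
      (\<forall>(c, r) \<in> \<sigma>. \<forall>(c', r') \<in> \<sigma>. cball c (lam * r) \<inter> cball c' (lam * r') \<noteq> {})}"

end

theory Submission imports Defs begin
lemma key_alg:
  fixes u :: "'a \<Rightarrow> 'b::real_inner" and w r :: "'a \<Rightarrow> real"
  assumes fin: "finite T"
    and w0: "\<forall>c\<in>T. 0 \<le> w c" and w1: "sum w T = 1"
    and r0: "\<forall>c\<in>T. 0 < r c"
    and sum0: "(\<Sum>c\<in>T. w c *\<^sub>R u c) = 0"
    and nu: "\<forall>c\<in>T. norm (u c) = t * r c"
    and pd: "\<forall>c\<in>T. \<forall>c'\<in>T. c \<noteq> c' \<longrightarrow> norm (u c - u c') \<le> l * (r c + r c')"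
    and l0: "0 \<le> l" and lt: "l \<le> t"
  shows "t^2 * card T \<le> 2 * l^2 * (real (card T) - 1)"
proof -
  define B where "B = (\<Sum>c\<in>T. w c * r c)"
  define Q where "Q = (\<Sum>c\<in>T. (w c * r c)^2)"
  define g where "g c c' = (t^2-2*l^2) * (r c * r c') + (if c = c' then 2*l^2*(r c)^2 else 0)" for c c'
  have ib: "g c c' \<le> inner (u c) (u c')" if c: "c \<in> T" and c': "c' \<in> T" for c c'
  proof (cases "c = c'")
    case True
    then show ?thesis using nu c by (simp add: g_def power2_norm_eq_inner[symmetric] power_mult_distrib power2_eq_square algebra_simps)
  next
    case False
    have n1: "norm (u c - u c')^2 = (t * r c)^2 + (t*r c')^2 - 2 * inner (u c) (u c')"
    proof -
      have "norm (u c - u c')^2 = norm (u c)^2 + norm (u c')^2 - 2 * inner (u c) (u c')"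
        by (simp add: power2_norm_eq_inner inner_diff inner_commute)
      then show ?thesis using nu c c' by simp
    qed
    have "norm (u c - u c')^2 \<le> (l * (r c + r c'))^2"
      using pd c c' False by (simp add: power_mono)
    moreover have "0 \<le> (t^2 - l^2) * (r c - r c')^2"
      using lt l0 by (simp add: power_mono)
    ultimately show ?thesis using False n1 unfolding g_def
      by (simp add: power2_eq_square algebra_simps)
  qed
  have "0 = inner (\<Sum>c\<in>T. w c *\<^sub>R u c) (\<Sum>c\<in>T. w c *\<^sub>R u c)" using sum0 by simp
  also have "\<dots> = (\<Sum>c\<in>T. \<Sum>c'\<in>T. w c * w c' * inner (u c) (u c'))"
    by (simp add: inner_sum_left inner_sum_right sum_distrib_left mult.assoc, intro sum.cong refl, simp add: inner_commute)
  also have "\<dots> \<ge> (\<Sum>c\<in>T. \<Sum>c'\<in>T. w c * w c' * g c c')"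
    by (intro sum_mono mult_left_mono ib) (use w0 in auto)
  finally have le0: "(\<Sum>c\<in>T. \<Sum>c'\<in>T. w c * w c' * g c c') \<le> 0" .
  have "(\<Sum>c\<in>T. \<Sum>c'\<in>T. w c * w c' * g c c') =
     (\<Sum>c\<in>T. \<Sum>c'\<in>T. (t^2-2*l^2) * ((w c * r c) * (w c' * r c'))) +
     (\<Sum>c\<in>T. \<Sum>c'\<in>T. (if c = c' then 2*l^2*(w c * r c)^2 else 0))"
  proof -
    have "w c * w c' * g c c' = (t^2-2*l^2) * ((w c * r c) * (w c' * r c')) +
       (if c = c' then 2*l^2*(w c * r c)^2 else 0)" for c c'
      unfolding g_def by (simp add: algebra_simps power2_eq_square)
    then show ?thesis by (simp add: sum.distrib)
  qed
  also have "\<dots> = (t^2-2*l^2) * B^2 + 2*l^2*Q"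
  proof -
    have e1: "(\<Sum>c\<in>T. \<Sum>c'\<in>T. (t^2-2*l^2) * ((w c * r c) * (w c' * r c'))) = (t^2-2*l^2) * B^2"
    proof -
      have "B^2 = (\<Sum>c\<in>T. \<Sum>c'\<in>T. (w c * r c) * (w c' * r c'))"
        unfolding B_def power2_eq_square by (rule sum_product)
      then show ?thesis by (simp add: sum_distrib_left)
    qed
    have e2: "(\<Sum>c\<in>T. \<Sum>c'\<in>T. (if c = c' then 2*l^2*(w c * r c)^2 else 0)) = 2*l^2*Q"
      unfolding Q_def sum_distrib_left using fin by (simp add: sum.delta)
    show ?thesis using e1 e2 by simp
  qed
  finally have main: "(t^2-2*l^2) * B^2 + 2*l^2*Q \<le> 0" using le0 by simp
  have CS: "B^2 \<le> Q * card T" unfolding B_def Q_def by (rule sum_squared_le_sum_of_squares)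
  have "\<exists>c\<in>T. w c > 0"
  proof (rule ccontr)
    assume "\<not> ?thesis"
    then have "\<forall>c\<in>T. w c = 0" using w0 by force
    then have "sum w T = 0" by simp
    with w1 show False by simp
  qed
  then obtain c where c: "c \<in> T" "w c > 0" by blast
  have "B > 0" unfolding B_def
    by (rule sum_pos2[OF fin c(1)]) (use c r0 w0 in auto)
  have "t^2 * B^2 * card T \<le> 2*l^2*B^2* card T - 2*l^2*Q * card T"
    using mult_right_mono[OF main, of "real (card T)"] by (simp add: algebra_simps)
  also have "\<dots> \<le> 2*l^2*B^2* card T - 2*l^2*B^2"
    using mult_left_mono[OF CS, of "2*l^2"] by (simp add: algebra_simps)
  finally have "B^2 * (t^2 * card T) \<le> B^2 * (2 * l^2 * (real (card T) - 1))"
    by (simp add: algebra_simps)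
  then show ?thesis using \<open>B > 0\<close> by simp
qed

lemma exists_min:
  fixes \<sigma> :: "('a::euclidean_space \<times> real) set"
  assumes fin: "finite \<sigma>" and ne: "\<sigma> \<noteq> {}" and pos: "\<forall>(c,r)\<in>\<sigma>. r > 0"
  obtains x t where "t \<ge> 0" "\<forall>(c,r)\<in>\<sigma>. dist x c \<le> t*r"
    "\<And>y s. \<forall>(c,r)\<in>\<sigma>. dist y c \<le> s*r \<Longrightarrow> t \<le> s"
proof -
  obtain c0 r0 where p0: "(c0,r0)\<in>\<sigma>" using ne by auto
  have r00: "r0 > 0" using pos p0 by auto
  define s0 where "s0 = (\<Sum>(c,r)\<in>\<sigma>. dist c0 c / r)"
  have s0ge: "dist c0 c / r \<le> s0" if "(c,r)\<in>\<sigma>" for c r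
    unfolding s0_def
    using member_le_sum[OF that, of "\<lambda>(c,r). dist c0 c / r"] fin pos by fastforce
  have s00: "0 \<le> s0" unfolding s0_def using pos by (intro sum_nonneg) auto
  define F where "F = {p::'a\<times>real. \<forall>(c,r)\<in>\<sigma>. dist (fst p) c \<le> snd p * r}"
  define K where "K = (cball c0 (s0*r0) \<times> {0..s0}) \<inter> F"
  have "F = (\<Inter>q\<in>\<sigma>. {p. dist (fst p) (fst q) \<le> snd p * snd q})"
    unfolding F_def by force
  moreover have "closed {p::'a\<times>real. dist (fst p) (fst q) \<le> snd p * snd q}" for q
    by (intro closed_Collect_le continuous_intros)
  ultimately have "closed F" by auto
  then have cK: "compact K" unfolding K_def
    by (intro compact_Int_closed compact_Times compact_cball compact_Icc)
  have "(c0, s0) \<in> K" unfolding K_def F_def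
  proof (simp add: s00, intro conjI ballI)
    show "0 \<le> s0 * r0" using s00 r00 by simp
    fix q assume q: "q \<in> \<sigma>"
    obtain c r where [simp]: "q = (c,r)" by force
    have "r > 0" using pos q by auto
    then show "case q of (c, r) \<Rightarrow> dist c0 c \<le> s0 * r"
      using s0ge[of c r] q by (simp add: divide_le_eq)
  qed
  then have "K \<noteq> {}" by auto
  from continuous_attains_inf[OF cK this continuous_on_snd[OF continuous_on_id]]
  obtain p where p: "p \<in> K" "\<And>q. q \<in> K \<Longrightarrow> snd p \<le> snd q" by auto
  show ?thesis
  proof
    show "0 \<le> snd p" using p unfolding K_def by auto
    show "\<forall>(c,r)\<in>\<sigma>. dist (fst p) c \<le> snd p * r" using p unfolding K_def F_def by auto
    fix y s assume ys: "\<forall>(c,r)\<in>\<sigma>. dist y c \<le> s*r"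
    show "snd p \<le> s"
    proof (rule ccontr)
      assume "\<not> snd p \<le> s"
      then have lt: "s < snd p" by simp
      have "snd p \<le> s0" using p unfolding K_def by auto
      have d0: "dist y c0 \<le> s * r0" using ys p0 by auto
      then have "0 \<le> s" using r00 by (metis zero_le_dist order_trans zero_le_mult_iff not_le)
      have "dist c0 y \<le> s0 * r0" using d0 lt \<open>snd p \<le> s0\<close> r00
        by (smt (verit, best) dist_commute mult_right_mono)
      then have "(y, s) \<in> K" unfolding K_def F_def using ys \<open>0 \<le> s\<close> lt \<open>snd p \<le> s0\<close> by auto
      then show False using p(2)[of "(y,s)"] lt by simp
    qed
  qed
qed

lemma cech_point:
  fixes \<sigma> :: "('a::euclidean_space \<times> real) set"
  assumes fin: "finite \<sigma>" and ne: "\<sigma> \<noteq> {}" and pos: "\<forall>(c,r)\<in>\<sigma>. r > 0"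
    and vr: "\<forall>(c,r)\<in>\<sigma>. \<forall>(c',r')\<in>\<sigma>. dist c c' \<le> l*(r+r')" and l0: "0 \<le> l"
  shows "\<exists>x. \<forall>(c,r)\<in>\<sigma>. dist c x \<le> sqrt (2 * real DIM('a) / (real DIM('a) + 1)) * l * r"
proof -
  define k where "k = sqrt (2 * real DIM('a) / (real DIM('a) + 1))"
  obtain t x where t0: "t \<ge> 0" and feas: "\<forall>(c,r)\<in>\<sigma>. dist x c \<le> t*r"
    and minim: "\<And>y s. \<forall>(c,r)\<in>\<sigma>. dist y c \<le> s*r \<Longrightarrow> t \<le> s"
    by (rule exists_min[OF fin ne pos]) (rule that; assumption)
  have "real DIM('a) \<ge> 1" using DIM_positive[where 'a='a] by linarith
  then have "1 \<le> 2 * real DIM('a) / (real DIM('a) + 1)" by (simp add: le_divide_eq)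
  then have k1: "1 \<le> k" unfolding k_def by simp
  have tk: "t \<le> k * l"
  proof (cases "t \<le> l")
    case True
    have "l \<le> k * l" using k1 l0 mult_right_mono[OF k1 l0] by simp
    then show ?thesis using True by linarith
  next
    case False
    then have lt: "l < t" by simp
    then have tpos: "t > 0" using l0 by simp
    define A where "A = {c. \<exists>r. (c,r)\<in>\<sigma> \<and> dist x c = t*r}"
    have finA: "finite A"
    proof (rule finite_subset[OF _ finite_imageI[OF fin, of fst]])
      show "A \<subseteq> fst ` \<sigma>" unfolding A_def by force
    qed
    have hull: "x \<in> convex hull A"
    proof (rule ccontr)
      assume nx: "x \<notin> convex hull A"
      have "closed (convex hull A)"
        by (rule compact_imp_closed[OF compact_convex_hull[OF finite_imp_compact[OF finA]]])
      from separating_hyperplane_closed_point[OF convex_convex_hull this nx]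
      obtain a b where ab: "inner a x < b" "\<forall>y\<in>convex hull A. inner a y > b" by blast
      have act: "inner a (c - x) > 0" if "c \<in> A" for c
      proof -
        have "b < inner a c" using ab(2) hull_inc[OF that, of convex] by blast
        then show ?thesis using ab(1) by (simp add: inner_diff_right)
      qed
      have ev: "\<forall>q\<in>\<sigma>. eventually (\<lambda>e. dist (x + e *\<^sub>R a) (fst q) < t * snd q) (at_right 0)"
      proof
        fix q assume q: "q \<in> \<sigma>"
        obtain c r where qq[simp]: "q = (c,r)" by force
        have rpos: "r > 0" using q pos by auto
        have le: "dist x c \<le> t * r" using q feas by auto
        show "eventually (\<lambda>e. dist (x + e *\<^sub>R a) (fst q) < t * snd q) (at_right 0)"
        proof (cases "dist x c < t * r")
          case True
          have "((\<lambda>e. dist (x + e *\<^sub>R a) c) \<longlongrightarrow> dist (x + 0 *\<^sub>R a) c) (at_right 0)"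
            by (intro tendsto_intros)
          then have "((\<lambda>e. dist (x + e *\<^sub>R a) c) \<longlongrightarrow> dist x c) (at_right 0)" by simp
          from order_tendstoD(2)[OF this True] show ?thesis by simp
        next
          case False
          then have eq: "dist x c = t * r" using le by simp
          then have cA: "c \<in> A" unfolding A_def using q by auto
          define g where "g = inner a (c - x)"
          have g0: "g > 0" using act[OF cA] g_def by simp
          define \<delta> where "\<delta> = 2 * g / (norm a ^ 2 + 1)"
          have den: "norm a ^ 2 + 1 > 0" by (metis add_nonneg_pos zero_le_power2 zero_less_one)
          have d0: "\<delta> > 0" unfolding \<delta>_def using g0 den by (intro divide_pos_pos) auto
          have e1: "eventually (\<lambda>e. e < \<delta>) (at_right (0::real))"
            using order_tendstoD(2)[OF tendsto_ident_at d0] .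
          have e2: "eventually (\<lambda>e. 0 < e) (at_right (0::real))" by (rule eventually_at_right_less)
          show ?thesis
          proof (rule eventually_mono[OF eventually_conj[OF e1 e2]])
            fix e :: real assume e: "e < \<delta> \<and> 0 < e"
            have "e * (norm a ^ 2 + 1) < 2 * g"
              using e den unfolding \<delta>_def by (simp add: less_divide_eq)
            then have "e * norm a ^ 2 < 2 * g" by (smt (verit) e mult_pos_pos distrib_left mult.right_neutral)
            then have ineq: "e * (e * norm a ^ 2) < e * (2 * g)" using e by simp
            have "dist (x + e *\<^sub>R a) c ^ 2 = norm ((x - c) + e *\<^sub>R a) ^ 2"
              by (simp add: dist_norm algebra_simps)
            also have "\<dots> = inner (x-c) (x-c) + 2 * e * inner (x - c) a + e^2 * inner a a"
              unfolding power2_norm_eq_inner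
              by (simp add: inner_add_left inner_add_right inner_commute
                  algebra_simps power2_eq_square)
            also have "\<dots> = (t*r)^2 - (e * (2 * g) - e * (e * norm a ^ 2))"
            proof -
              have i1: "inner (x-c) (x-c) = (t*r)^2" using eq by (simp add: dist_norm power2_norm_eq_inner[symmetric])
              have i2: "inner a a = norm a ^ 2" by (simp add: power2_norm_eq_inner)
              have i3: "inner (x - c) a = - g" unfolding g_def by (simp add: inner_diff_left inner_diff_right inner_commute)
              show ?thesis unfolding i1 i2 i3 by (simp add: power2_eq_square algebra_simps)
            qed
            also have "\<dots> < (t*r)^2" using ineq by simp
            finally have "dist (x + e *\<^sub>R a) c ^ 2 < (t*r)^2" .
            then show "dist (x + e *\<^sub>R a) (fst q) < t * snd q"
              using tpos rpos by (simp add: power2_less_imp_less)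
          qed
        qed
      qed
      have "eventually (\<lambda>e. \<forall>q\<in>\<sigma>. dist (x + e *\<^sub>R a) (fst q) < t * snd q) (at_right 0)"
        by (rule eventually_ball_finite[OF fin ev])
      then obtain e :: real where e: "\<forall>q\<in>\<sigma>. dist (x + e *\<^sub>R a) (fst q) < t * snd q"
        using eventually_happens'[OF trivial_limit_at_right_real] by blast
      define y where "y = x + e *\<^sub>R a"
      define s where "s = Max ((\<lambda>q. dist y (fst q) / snd q) ` \<sigma>)"
      have "s < t" unfolding s_def using fin ne e pos
        by (subst Max_less_iff) (auto simp: y_def divide_less_eq)
      moreover have sf: "\<forall>(c,r)\<in>\<sigma>. dist y c \<le> s*r"
      proof (intro ballI, clarify)
        fix c r assume cr: "(c,r) \<in> \<sigma>"
        have "dist y c / r \<le> s" unfolding s_def using fin cr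
          by (intro Max_ge) (auto intro!: image_eqI[where x="(c,r)"])
        then show "dist y c \<le> s * r" using pos cr by (auto simp: divide_le_eq)
      qed
      ultimately show False using minim[OF sf] by linarith
    qed
    obtain S w where S: "finite S" "S \<subseteq> A" "card S \<le> DIM('a) + 1"
      "\<forall>v\<in>S. 0 \<le> w v" "sum w S = 1" "(\<Sum>v\<in>S. w v *\<^sub>R v) = x"
      using hull unfolding convex_hull_caratheodory by blast
    have rofA: "\<exists>r. (c,r)\<in>\<sigma> \<and> r > 0 \<and> dist x c / t = r" if "c \<in> A" for c
      using that pos tpos unfolding A_def by auto
    have key: "t^2 * card S \<le> 2 * l^2 * (real (card S) - 1)"
    proof (rule key_alg[where u="\<lambda>c. c - x" and r="\<lambda>c. dist x c / t" and w=w])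
      show "finite S" "\<forall>c\<in>S. 0 \<le> w c" "sum w S = 1" "0 \<le> l" "l \<le> t" using S l0 lt by auto
      show "\<forall>c\<in>S. 0 < dist x c / t" using rofA S(2) by force
      show "(\<Sum>c\<in>S. w c *\<^sub>R (c - x)) = 0"
        using S by (simp add: scaleR_diff_right sum_subtractf scaleR_sum_left[symmetric])
      show "\<forall>c\<in>S. norm (c - x) = t * (dist x c / t)"
        using tpos by (simp add: dist_norm norm_minus_commute)
      show "\<forall>c\<in>S. \<forall>c'\<in>S. c \<noteq> c' \<longrightarrow> norm (c - x - (c' - x)) \<le> l * (dist x c / t + dist x c' / t)"
      proof (intro ballI impI)
        fix c c' assume c: "c \<in> S" and c': "c' \<in> S" and "c \<noteq> c'"
        obtain r where r: "(c,r)\<in>\<sigma>" "dist x c / t = r" using rofA c S(2) by blast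
        obtain r' where r': "(c',r')\<in>\<sigma>" "dist x c' / t = r'" using rofA c' S(2) by blast
        have "dist c c' \<le> l*(r+r')" using vr r(1) r'(1) by fastforce
        then show "norm (c - x - (c' - x)) \<le> l * (dist x c / t + dist x c' / t)"
          using r r' by (simp add: dist_norm)
      qed
    qed
    have S1: "card S \<ge> 1"
    proof -
      have "S \<noteq> {}" using S(5) by auto
      then show ?thesis using S(1) by (simp add: Suc_le_eq card_gt_0_iff)
    qed
    define n where "n = real (card S)"
    define d where "d = real DIM('a)"
    have n1: "n \<ge> 1" using S1 unfolding n_def by simp
    have nd: "n \<le> d + 1" using S(3) unfolding n_def d_def by simp
    have "t^2 \<le> 2 * l^2 * (1 - 1/n)"
      using key n1 unfolding n_def[symmetric] by (simp add: field_simps)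
    also have "\<dots> \<le> 2 * l^2 * (1 - 1/(d+1))"
      using n1 nd by (intro mult_left_mono) (auto simp: frac_le)
    also have "\<dots> = (2 * d / (d + 1)) * l^2"
    proof -
      have "d + 1 > 0" unfolding d_def by simp
      then show ?thesis by (simp add: field_simps)
    qed
    finally have "t \<le> sqrt ((2 * d / (d + 1)) * l^2)" by (rule real_le_rsqrt)
    also have "sqrt ((2 * d / (d + 1)) * l^2) = sqrt (2 * d / (d + 1)) * l"
      using l0 by (simp only: real_sqrt_mult real_sqrt_abs abs_of_nonneg)
    finally show ?thesis unfolding k_def d_def .
  qed
  show ?thesis
  proof (intro exI ballI, clarify)
    fix c r assume cr: "(c,r)\<in>\<sigma>"
    have "dist c x \<le> t * r" using feas cr by (auto simp: dist_commute)
    also have "\<dots> \<le> k * l * r" using mult_right_mono[OF tk, of r] pos cr by auto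
    finally show "dist c x \<le> sqrt (2 * real DIM('a) / (real DIM('a) + 1)) * l * r"
      unfolding k_def .
  qed
qed

lemma balls_dist:
  assumes "cball (c::'a::euclidean_space) e \<inter> cball c' e' \<noteq> {}"
  shows "dist c c' \<le> e + e'"
proof -
  obtain z where "dist c z \<le> e" "dist c' z \<le> e'" using assms by auto
  then show ?thesis using dist_triangle[of c c' z] by (simp add: dist_commute)
qed

theorem mainTheorem4:
  fixes M :: "('a::euclidean_space \<times> real) set" and lam lam' :: real
  assumes "disk_system M"
    and "lam \<ge> 0" and "lam' \<ge> 0"
    and "sqrt (2 * real DIM('a) / (real DIM('a) + 1)) * lam' \<le> lam"
  shows "gen_VR M lam' \<subseteq> gen_cech M lam \<and> gen_cech M lam \<subseteq> gen_VR M lam"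
proof
  have finM: "finite M" and posM: "\<forall>(c,r)\<in>M. r > 0" using assms(1) unfolding disk_system_def by auto
  show "gen_VR M lam' \<subseteq> gen_cech M lam"
  proof
    fix \<sigma> assume s: "\<sigma> \<in> gen_VR M lam'"
    have ne: "\<sigma> \<noteq> {}" and sub: "\<sigma> \<subseteq> M"
      and pw: "\<forall>(c, r) \<in> \<sigma>. \<forall>(c', r') \<in> \<sigma>. cball c (lam' * r) \<inter> cball c' (lam' * r') \<noteq> {}"
      using s unfolding gen_VR_def by auto
    have fin: "finite \<sigma>" using finite_subset[OF sub finM] .
    have pos: "\<forall>(c,r)\<in>\<sigma>. r > 0" using posM sub by auto
    have vr: "\<forall>(c,r)\<in>\<sigma>. \<forall>(c',r')\<in>\<sigma>. dist c c' \<le> lam'*(r+r')"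
    proof (intro ballI, clarify)
      fix c r c' r' assume "(c,r)\<in>\<sigma>" "(c',r')\<in>\<sigma>"
      then have "cball c (lam' * r) \<inter> cball c' (lam' * r') \<noteq> {}" using pw by fastforce
      from balls_dist[OF this] show "dist c c' \<le> lam'*(r+r')" by (simp add: distrib_left)
    qed
    obtain x where x: "\<forall>(c,r)\<in>\<sigma>. dist c x \<le> sqrt (2 * real DIM('a) / (real DIM('a) + 1)) * lam' * r"
      using cech_point[OF fin ne pos vr assms(3)] by blast
    have "x \<in> (\<Inter>(c, r) \<in> \<sigma>. cball c (lam * r))"
    proof (clarsimp)
      fix c r assume cr: "(c,r)\<in>\<sigma>"
      have "dist c x \<le> sqrt (2 * real DIM('a) / (real DIM('a) + 1)) * lam' * r" using x cr by auto
      also have "\<dots> \<le> lam * r" using mult_right_mono[OF assms(4), of r] pos cr by auto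
      finally show "dist c x \<le> lam * r" .
    qed
    then show "\<sigma> \<in> gen_cech M lam" unfolding gen_cech_def using ne sub by auto
  qed
  show "gen_cech M lam \<subseteq> gen_VR M lam"
  proof
    fix \<sigma> assume s: "\<sigma> \<in> gen_cech M lam"
    then obtain y where y: "y \<in> (\<Inter>(c, r) \<in> \<sigma>. cball c (lam * r))" unfolding gen_cech_def by auto
    have "\<forall>(c, r) \<in> \<sigma>. \<forall>(c', r') \<in> \<sigma>. cball c (lam * r) \<inter> cball c' (lam * r') \<noteq> {}"
    proof (intro ballI, clarify)
      fix c r c' r' assume "(c,r)\<in>\<sigma>" "(c',r')\<in>\<sigma>" "cball c (lam * r) \<inter> cball c' (lam * r') = {}"
      then show False using y by blast
    qed
    then show "\<sigma> \<in> gen_VR M lam" using s unfolding gen_cech_def gen_VR_def by auto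
  qed
qed

end
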